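(* Let $N\ge 2$ and $T\ge 1$ be integers, let $a_1,\ldots,a_N$ be real numbers with $a_1+\cdots+a_N=1$, and let $\mu_1,\ldots,\mu_T$ be real numbers. Let $J$ be the $((N-1)T+1)\times((N-1)T+1)$ real matrix defined as follows (with $e_k$ denoting the $k$-th standard basis row vector of length $(N-1)T+1$): - for $i=1,\ldots,(N-2)T+1$, the $i$-th row of $J$ is $e_{i+T}$; - for $m=1,\ldots,T$, the $((N-2)T+1+m)$-th row of $J$ is $r_m$, where $r_0:=e_{(N-1)T+1}$ and recursively $$r_m=\mu_m\Big(a_1\, r_{m-1}+\sum_{l=2}^{N} a_l\, e_{(N-l)T+m}\Big),\qquad m=1,\ldots,T.$$ Then the characteristic polynomial $\det(\lambda I-J)$ of $J$ equals $$p(\lambda)=\lambda^{(N-1)T+1}-(\mu_1\cdots\mu_T)\,\big(a_1\lambda^{N-1}+a_2\lambda^{N-2}+\cdots+a_{N-1}\lambda+a_N\big)^{T}.$$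
   Context: Motivation/setting: for a $C^1$ map $f:\mathbb{R}\to\mathbb{R}$ with a $T$-cycle $x_0^*,\ldots,x_{T-1}^*$ and the delayed feedback control $x(k+1)=f(x(k))+u(k)$, $u(k)=(a_1-1)f(x(k))+a_2f(x(k-T))+\cdots+a_Nf(x(k-(N-1)T))$, define $G:\mathbb{R}^{(N-1)T+1}\to\mathbb{R}^{(N-1)T+1}$ by $G(x_1,\ldots,x_{(N-1)T+1})=(x_2,\ldots,x_{(N-1)T+1},\,a_1f(x_{(N-1)T+1})+a_2f(x_{(N-2)T+1})+\cdots+a_Nf(x_1))$ and $F=G^T$. The matrix $J$ above is the Jacobian of $F$ at the point $(x_0^*,\ldots,x^*_{(N-1)T})$ (indices mod $T$), with $\mu_j$ the derivatives of $f$ along the cycle; the statement concerns the explicitly defined matrix for arbitrary real $\mu_j$. *)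

theory Defs
  imports "Jordan_Normal_Form.Char_Poly"
begin

(* Convention: indices of a and mu are 1-based (a 1 .. a N, mu 1 .. mu T), as in the paper.
   Matrix rows/columns are 0-based in Jordan_Normal_Form: the paper's e_k is the
   indicator of column k-1. *)

fun dfc_row :: "nat \<Rightarrow> nat \<Rightarrow> (nat \<Rightarrow> real) \<Rightarrow> (nat \<Rightarrow> real) \<Rightarrow> nat \<Rightarrow> (nat \<Rightarrow> real)" where
  "dfc_row N T a mu 0 = (\<lambda>j. if j = (N - 1) * T then 1 else 0)"
| "dfc_row N T a mu (Suc m) = (\<lambda>j. mu (Suc m) *
      (a 1 * dfc_row N T a mu m j
       + (\<Sum>l = 2..N. a l * (if j = (N - l) * T + Suc m - 1 then 1 else 0))))"

definition dfc_jacobian :: "nat \<Rightarrow> nat \<Rightarrow> (nat \<Rightarrow> real) \<Rightarrow> (nat \<Rightarrow> real) \<Rightarrow> real mat" where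
  "dfc_jacobian N T a mu = mat ((N - 1) * T + 1) ((N - 1) * T + 1)
     (\<lambda>(i, j). if i < (N - 2) * T + 1 then (if j = i + T then 1 else 0)
               else dfc_row N T a mu (i + 1 - ((N - 2) * T + 1)) j)"

end

theory Submission imports Defs begin

definition Umat :: "nat \<Rightarrow> nat \<Rightarrow> real \<Rightarrow> real mat" where
  "Umat n T x = mat n n (\<lambda>(k,c). if k \<le> c \<and> k mod T = c mod T then inverse x ^ ((c-k) div T) else 0)"

definition Lmat :: "nat \<Rightarrow> nat \<Rightarrow> (nat \<Rightarrow> real) \<Rightarrow> real \<Rightarrow> real mat" where
  "Lmat n K mu a1 = mat n n (\<lambda>(i,k). (if i = k then 1 else 0) - (if K < i \<and> k = i - 1 then mu (i+1-K) * a1 else 0))"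

definition U2mat :: "nat \<Rightarrow> nat \<Rightarrow> (nat \<Rightarrow> real) \<Rightarrow> real mat" where
  "U2mat n K y = mat n n (\<lambda>(k,c). (if k = c then 1 else 0) + (if c = n-1 \<and> K \<le> k \<and> k < n-1 then y (k+1-K) else 0))"

lemma prod_list_ones: "(\<And>i. i < n \<Longrightarrow> A $$ (i,i) = 1) \<Longrightarrow> A \<in> carrier_mat n n \<Longrightarrow> prod_list (diag_mat A) = (1::real)"
  by (simp add: prod_list_diag_prod)

lemma det_Umat: "det (Umat n T x) = 1"
  by (subst det_upper_triangular[of _ n]) (auto simp: Umat_def upper_triangular_def prod_list_diag_prod)

lemma det_Lmat: "det (Lmat n K mu a1) = 1"
  by (subst det_lower_triangular[of n]) (auto simp: Lmat_def prod_list_diag_prod intro!: prod.neutral)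

lemma det_U2mat: "det (U2mat n K y) = 1"
  by (subst det_upper_triangular[of _ n]) (auto simp: U2mat_def upper_triangular_def prod_list_diag_prod intro!: prod.neutral)

lemma sum_delta_mult: "(p::nat) < n \<Longrightarrow> (\<Sum>k<n. (if k = p then c else 0) * f k) = c * (f p :: real)"
proof -
  assume p: "p < n"
  have "(\<Sum>k<n. (if k = p then c else 0) * f k) = (\<Sum>k<n. if k = p then c * f p else 0)"
    by (rule sum.cong) auto
  also have "\<dots> = c * f p" using sum.delta[of "{..<n}" p "\<lambda>_. c * f p"] p by simp
  finally show ?thesis .
qed

lemma dfc_row_sum:
  assumes "\<And>l. l \<in> {2..N} \<Longrightarrow> (N - l) * T + m < n"
  shows "(\<Sum>k<n. dfc_row N T a mu (Suc m) k * u k) =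
    mu (Suc m) * (a 1 * (\<Sum>k<n. dfc_row N T a mu m k * u k) + (\<Sum>l=2..N. a l * u ((N-l)*T + m)))"
proof -
  have "(\<Sum>k<n. dfc_row N T a mu (Suc m) k * u k) =
     mu (Suc m) * (a 1 * (\<Sum>k<n. dfc_row N T a mu m k * u k) + (\<Sum>l=2..N. \<Sum>k<n. a l * ((if k = (N-l)*T + m then 1 else 0) * u k)))"
    by (simp add: algebra_simps sum_distrib_left sum.distrib sum_distrib_right sum.swap[of _ "{2..N}"])
  also have "(\<Sum>l=2..N. \<Sum>k<n. a l * ((if k = (N-l)*T + m then 1 else 0) * u k)) = (\<Sum>l=2..N. a l * u ((N-l)*T + m))"
    apply (rule sum.cong[OF refl])
    apply (subst sum_distrib_left[symmetric])
    using assms by (simp add: sum_delta_mult)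
  finally show ?thesis .
qed


lemma sum_two_delta: "(i::nat) < n \<Longrightarrow> j < n \<Longrightarrow> (\<Sum>k<n. (if k = i then 1 else 0) * F k - (if k = j then d else 0) * F k) = F i - d * (F j::real)"
  by (simp add: sum_subtractf sum_delta_mult)

lemma sum_2delta_set: "finite S \<Longrightarrow> (\<Sum>k\<in>S. ((if k = p then \<alpha> else 0) - (if k = q then \<beta> else 0)) * f k)
   = (if p \<in> S then \<alpha> * f p else 0) - (if q \<in> S then \<beta> * (f q :: real) else 0)"
  by (simp add: left_diff_distrib sum_subtractf if_distrib[of "\<lambda>z. z * _"] sum.delta cong: if_cong)

lemma U2_mult_entry: assumes B: "B \<in> carrier_mat n n" and i: "i < n" and c: "c < n"
  shows "(B * U2mat n K y) $$ (i,c) = B $$ (i,c) + (if c = n - 1 then (\<Sum>k\<in>{K..<n-1}. B $$ (i,k) * y (k+1-K)) else 0)"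
proof -
  have "(B * U2mat n K y) $$ (i,c) = (\<Sum>k<n. B $$ (i,k) * U2mat n K y $$ (k,c))"
    using B i c by (simp add: scalar_prod_def atLeast0LessThan U2mat_def)
  also have "\<dots> = (\<Sum>k<n. (if k = c then 1 else 0) * B $$ (i,k)) + (\<Sum>k<n. if k \<in> {K..<n-1} then (if c = n - 1 then B $$ (i,k) * y (k+1-K) else 0) else 0)"
    unfolding sum.distrib[symmetric] by (rule sum.cong) (use c in \<open>auto simp: U2mat_def algebra_simps\<close>)
  also have "(\<Sum>k<n. (if k = c then 1 else 0) * B $$ (i,k)) = B $$ (i,c)"
    using sum_delta_mult[OF c, of 1 "\<lambda>k. B $$ (i,k)"] by simp
  also have "(\<Sum>k<n. if k \<in> {K..<n-1} then (if c = n - 1 then B $$ (i,k) * y (k+1-K) else 0) else 0)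
     = (\<Sum>k\<in>{..<n} \<inter> {K..<n-1}. (if c = n - 1 then B $$ (i,k) * y (k+1-K) else 0))"
    by (rule sum.inter_restrict[symmetric]) simp
  also have "{..<n} \<inter> {K..<n-1} = {K..<n-1}" by auto
  also have "(\<Sum>k\<in>{K..<n-1}. (if c = n - 1 then B $$ (i,k) * y (k+1-K) else 0)) =
     (if c = n - 1 then (\<Sum>k\<in>{K..<n-1}. B $$ (i,k) * y (k+1-K)) else 0)" by simp
  finally show ?thesis .
qed

lemma mod_eq_small: fixes k c T :: nat assumes "k \<le> c" "c - k < T"
  shows "(k mod T = c mod T) \<longleftrightarrow> k = c"
proof
  assume "k mod T = c mod T"
  hence "T dvd c - k" using assms(1) mod_eq_dvd_iff_nat[of k c T] by simp
  then obtain q where "c - k = T * q" by auto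
  with assms(2) have "q = 0" by (cases q) auto
  with \<open>c - k = T * q\<close> assms(1) show "k = c" by simp
qed simp

context
  fixes N T :: nat and a mu :: "nat \<Rightarrow> real" and x :: real
  assumes N2: "N \<ge> 2" and T1: "T \<ge> 1" and x0: "x \<noteq> 0"
begin

abbreviation "nn \<equiv> (N-1)*T+1"
abbreviation "KK \<equiv> (N-2)*T+1"
abbreviation "AA \<equiv> dfc_jacobian N T a mu"
abbreviation "MM \<equiv> mat nn nn (\<lambda>(i,j). (if i = j then x else 0) - AA $$ (i,j))"
abbreviation "UU \<equiv> Umat nn T x"
abbreviation "QQ \<equiv> (\<Sum>l=1..N. a l * inverse x ^ (l-1))"

lemma nK: "nn = KK + T"
proof -
  have "(N-1)*T = (N-2)*T + T" using N2 by (cases N; cases "N - 1"; auto)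
  thus ?thesis by simp
qed

lemma AA_entry: "i < nn \<Longrightarrow> j < nn \<Longrightarrow> AA $$ (i,j) =
   (if i < KK then (if j = i + T then 1 else 0) else dfc_row N T a mu (i + 1 - KK) j)"
  by (simp add: dfc_jacobian_def)

lemma UU_entry: "k < nn \<Longrightarrow> c < nn \<Longrightarrow> UU $$ (k,c) =
   (if k \<le> c \<and> k mod T = c mod T then inverse x ^ ((c-k) div T) else 0)"
  by (simp add: Umat_def)

definition gg :: "nat \<Rightarrow> nat \<Rightarrow> real" where
  "gg m c = (\<Sum>k<nn. dfc_row N T a mu m k * UU $$ (k,c))"

lemma gg_Suc: assumes "m < T" shows
  "gg (Suc m) c = mu (Suc m) * (a 1 * gg m c + (\<Sum>l=2..N. a l * UU $$ ((N-l)*T + m, c)))"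
  unfolding gg_def
proof (rule dfc_row_sum)
  fix l assume "l \<in> {2..N}"
  hence "(N-l)*T \<le> (N-2)*T" by (intro mult_le_mono1) auto
  thus "(N - l) * T + m < nn" using assms nK by linarith
qed

lemma gg_0: "c < nn \<Longrightarrow> gg 0 c = UU $$ ((N-1)*T, c)"
  unfolding gg_def by (simp add: sum_delta_mult[where f="\<lambda>k. UU $$ (k,c)", simplified])


lemma carr: "MM \<in> carrier_mat nn nn" "UU \<in> carrier_mat nn nn"
  by (auto simp: Umat_def)

lemma MU_entry: assumes i: "i < nn" and c: "c < nn"
  shows "(MM * UU) $$ (i,c) = x * UU $$ (i,c) - (if i < KK then UU $$ (i+T,c) else gg (i+1-KK) c)"
proof -
  have "(MM * UU) $$ (i,c) = (\<Sum>k<nn. MM $$ (i,k) * UU $$ (k,c))"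
    using i c by (simp add: scalar_prod_def atLeast0LessThan Umat_def)
  also have "\<dots> = (\<Sum>k<nn. (if k = i then x else 0) * UU $$ (k,c) - AA $$ (i,k) * UU $$ (k,c))"
    by (rule sum.cong) (use i in \<open>auto simp: algebra_simps\<close>)
  also have "\<dots> = (\<Sum>k<nn. (if k = i then x else 0) * UU $$ (k,c)) - (\<Sum>k<nn. AA $$ (i,k) * UU $$ (k,c))"
    by (simp add: sum_subtractf)
  also have "(\<Sum>k<nn. (if k = i then x else 0) * UU $$ (k,c)) = x * UU $$ (i,c)"
    using i by (rule sum_delta_mult)
  also have "(\<Sum>k<nn. AA $$ (i,k) * UU $$ (k,c)) = (if i < KK then UU $$ (i+T,c) else gg (i+1-KK) c)"
  proof (cases "i < KK")
    case True
    have "(\<Sum>k<nn. AA $$ (i,k) * UU $$ (k,c)) = (\<Sum>k<nn. (if k = i + T then 1 else 0) * UU $$ (k,c))"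
      by (rule sum.cong) (use i True in \<open>auto simp: AA_entry\<close>)
    also have "\<dots> = UU $$ (i+T,c)"
      using sum_delta_mult[of "i+T" nn 1 "\<lambda>k. UU $$ (k,c)"] True nK by simp
    finally show ?thesis using True by simp
  next
    case False
    have "(\<Sum>k<nn. AA $$ (i,k) * UU $$ (k,c)) = gg (i+1-KK) c"
      unfolding gg_def by (rule sum.cong) (use i False in \<open>auto simp: AA_entry\<close>)
    then show ?thesis using False by simp
  qed
  finally show ?thesis .
qed

abbreviation "LL \<equiv> Lmat nn KK mu (a 1)"

lemma M3_entry: assumes i: "i < nn" and c: "c < nn"
  shows "(LL * (MM * UU)) $$ (i,c) = (MM * UU) $$ (i,c)
     - (if KK < i then mu (i+1-KK) * a 1 * (MM * UU) $$ (i - 1,c) else 0)"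
proof -
  have "(LL * (MM * UU)) $$ (i,c) = (\<Sum>k<nn. LL $$ (i,k) * (MM * UU) $$ (k,c))"
    using i c by (simp add: scalar_prod_def atLeast0LessThan Umat_def Lmat_def)
  also have "\<dots> = (\<Sum>k<nn. (if k = i then 1 else 0) * (MM * UU) $$ (k,c)
       - (if k = i - 1 then (if KK < i then mu (i+1-KK) * a 1 else 0) else 0) * (MM * UU) $$ (k,c))"
    by (rule sum.cong) (use i in \<open>auto simp: algebra_simps Lmat_def\<close>)
  also have "\<dots> = (MM * UU) $$ (i,c) - (if KK < i then mu (i+1-KK) * a 1 else 0) * (MM * UU) $$ (i - 1,c)"
    by (rule sum_two_delta) (use i in auto)
  finally show ?thesis by simp
qed


lemma T0: "T > 0" using T1 by simp

lemma U_val: assumes "k < nn" "c < nn" "k \<le> c" "k mod T = c mod T" "(c-k) div T = q"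
  shows "UU $$ (k,c) = inverse x ^ q"
  unfolding UU_entry[OF assms(1,2)] using assms(3-5) by simp

lemma U_zero: assumes "k < nn" "c < nn" "\<not> (k \<le> c \<and> k mod T = c mod T)"
  shows "UU $$ (k,c) = 0"
  unfolding UU_entry[OF assms(1,2)] using assms(3) by (simp only: if_False)

lemma U_near: assumes "i < nn" "c < nn" "c < i + T"
  shows "UU $$ (i,c) = (if c = i then 1 else 0)"
proof (cases "c = i")
  case True
  then show ?thesis using U_val[OF assms(1,2), of 0] by simp
next
  case False
  have "\<not> (i \<le> c \<and> i mod T = c mod T)"
  proof
    assume h: "i \<le> c \<and> i mod T = c mod T"
    hence "c - i < T" using assms by linarith
    with h mod_eq_small[of i c T] have "i = c" by blast
    with False show False by simp
  qed
  then show ?thesis using U_zero[OF assms(1,2)] False by simp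
qed

lemma c_repr: assumes "KK \<le> c" "c < nn"
  obtains s where "c = (N-2)*T + s" "1 \<le> s" "s \<le> T"
proof -
  have "c = (N-2)*T + (c - (N-2)*T)" using assms by simp
  moreover have "1 \<le> c - (N-2)*T" "c - (N-2)*T \<le> T" using assms nK by linarith+
  ultimately show ?thesis using that by blast
qed

lemma diffT: assumes "l \<le> N" "2 \<le> l" shows "(N-2)*T + T - (N-l)*T = (l-1)*T" "(N-2)*T - (N-l)*T = (l-2)*T"
proof -
  have "(N-2)*T + T = (N-1)*T" using nK by simp
  moreover have "(N-1)*T - (N-l)*T = (N-1-(N-l))*T" by (simp add: diff_mult_distrib)
  moreover have "N-1-(N-l) = l-1" using assms by simp
  ultimately show "(N-2)*T + T - (N-l)*T = (l-1)*T" by simp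
  have "(N-2)*T - (N-l)*T = (N-2-(N-l))*T" by (simp add: diff_mult_distrib)
  moreover have "N-2-(N-l) = l-2" using assms by simp
  ultimately show "(N-2)*T - (N-l)*T = (l-2)*T" by simp
qed

lemma U_col_l1: assumes l: "l \<in> {2..N}" and c: "KK \<le> c" "c < nn"
  shows "UU $$ ((N-l)*T, c) = (if c = nn - 1 then inverse x ^ (l-1) else 0)"
proof -
  obtain s where s: "c = (N-2)*T + s" "1 \<le> s" "s \<le> T" using c_repr[OF c] .
  have le: "(N-l)*T \<le> (N-2)*T" using l by (intro mult_le_mono1) auto
  have k: "(N-l)*T < nn" using le nK by linarith
  show ?thesis
  proof (cases "s = T")
    case True
    hence cn: "c = nn - 1" using s nK by simp
    have d: "c - (N-l)*T = (l-1)*T" using diffT[of l] l s True by simp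
    have "UU $$ ((N-l)*T, c) = inverse x ^ (l-1)"
    proof (rule U_val[OF k c(2)])
      show "(N-l)*T \<le> c" using le s by linarith
      show "((N-l)*T) mod T = c mod T" using s True by simp
      show "(c - (N-l)*T) div T = l - 1" unfolding d using T0 by simp
    qed
    thus ?thesis using cn by simp
  next
    case False
    hence "c \<noteq> nn - 1" using s nK by simp
    moreover have "c mod T = s" using s False by simp
    moreover have "((N-l)*T) mod T = 0" by simp
    ultimately show ?thesis using U_zero[OF k c(2)] s by simp
  qed
qed

lemma U_col_l2: assumes l: "l \<in> {2..N}" and r: "1 \<le> r" "r < T" and c: "KK \<le> c" "c < nn"
  shows "UU $$ ((N-l)*T + r, c) = (if c = (N-2)*T + r then inverse x ^ (l-2) else 0)"
proof -
  obtain s where s: "c = (N-2)*T + s" "1 \<le> s" "s \<le> T" using c_repr[OF c] .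
  have le: "(N-l)*T \<le> (N-2)*T" using l by (intro mult_le_mono1) auto
  have k: "(N-l)*T + r < nn" using le nK r by linarith
  show ?thesis
  proof (cases "s = r")
    case True
    have d: "c - ((N-l)*T + r) = (l-2)*T" using diffT[of l] l s True by simp
    have "UU $$ ((N-l)*T + r, c) = inverse x ^ (l-2)"
    proof (rule U_val[OF k c(2)])
      show "(N-l)*T + r \<le> c" using le s True by linarith
      show "((N-l)*T + r) mod T = c mod T" using s True by simp
      show "(c - ((N-l)*T + r)) div T = l - 2" unfolding d using T0 by simp
    qed
    thus ?thesis using s True by simp
  next
    case False
    have "((N-l)*T + r) mod T \<noteq> c mod T"
    proof (cases "s = T")
      case True thus ?thesis using s r by simp
    next
      case False2: False
      thus ?thesis using s r False by simp
    qed
    thus ?thesis using U_zero[OF k c(2)] s False by simp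
  qed
qed


abbreviation "M3 \<equiv> LL * (MM * UU)"

lemma M3_upper: assumes i: "i < KK" and c: "c < nn"
  shows "M3 $$ (i,c) = (if c = i then x else 0)"
proof -
  have inn: "i < nn" and iT: "i + T < nn" using i nK by linarith+
  have "M3 $$ (i,c) = x * UU $$ (i,c) - UU $$ (i+T,c)"
  proof -
    have n1: "\<not> KK < i" using i by simp
    show ?thesis by (simp only: M3_entry[OF inn c] MU_entry[OF inn c] n1 i if_False if_True diff_zero)
  qed
  also have "\<dots> = (if c = i then x else 0)"
  proof (cases "c < i + T")
    case True
    have "UU $$ (i+T,c) = 0" by (rule U_zero[OF iT c]) (use True in auto)
    then show ?thesis using U_near[OF inn c True] T0 by simp
  next
    case False
    show ?thesis
    proof (cases "i mod T = c mod T")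
      case True
      define q where "q = (c - (i+T)) div T"
      have e: "c - i = (c - (i+T)) + T" using False by simp
      have "(c - i) div T = ((c - (i+T)) + T) div T" by (simp only: e)
      also have "\<dots> = q + 1" unfolding q_def using T0 by simp
      finally have "(c - i) div T = q + 1" .
      hence "UU $$ (i,c) = inverse x ^ (q+1)" by (intro U_val[OF inn c]) (use True False in auto)
      moreover have "UU $$ (i+T,c) = inverse x ^ q" by (intro U_val[OF iT c]) (use True False q_def in auto)
      ultimately have "x * UU $$ (i,c) - UU $$ (i+T,c) = x * (inverse x * inverse x ^ q) - inverse x ^ q" by simp
      also have "\<dots> = 0" using x0 by (simp add: mult.assoc[symmetric])
      finally have z: "x * UU $$ (i,c) - UU $$ (i+T,c) = 0" .
      have "c \<noteq> i" using False T0 by simp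
      then show ?thesis by (simp only: z if_False)
    next
      case False2: False
      have "UU $$ (i,c) = 0" by (rule U_zero[OF inn c]) (use False2 in auto)
      moreover have "UU $$ (i+T,c) = 0" by (rule U_zero[OF iT c]) (use False2 in auto)
      moreover have "c \<noteq> i" using False T0 by simp
      ultimately show ?thesis by simp
    qed
  qed
  finally show ?thesis .
qed


lemma QQ_split: "QQ = a 1 + (\<Sum>l=2..N. a l * inverse x ^ (l-1))"
  using sum.atLeast_Suc_atMost[of 1 N "\<lambda>l. a l * inverse x ^ (l-1)"] N2 by (simp add: numeral_2_eq_2)

lemma xQQ: "x * QQ = a 1 * x + (\<Sum>l=2..N. a l * inverse x ^ (l-2))"
proof -
  have "x * QQ = a 1 * x + (\<Sum>l=2..N. a l * (x * inverse x ^ (l-1)))"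
    unfolding QQ_split by (simp add: algebra_simps sum_distrib_left)
  also have "(\<Sum>l=2..N. a l * (x * inverse x ^ (l-1))) = (\<Sum>l=2..N. a l * inverse x ^ (l-2))"
  proof (rule sum.cong[OF refl])
    fix l assume "l \<in> {2..N}"
    hence "l - 1 = Suc (l-2)" by auto
    thus "a l * (x * inverse x ^ (l-1)) = a l * inverse x ^ (l-2)" using x0 by (simp add: mult.assoc[symmetric])
  qed
  finally show ?thesis .
qed

lemma M3_lowK: assumes c: "KK \<le> c" "c < nn"
  shows "M3 $$ (KK,c) = (if c = KK then x else 0) - (if c = nn - 1 then mu 1 * QQ else 0)"
proof -
  have Kn: "KK < nn" using nK T0 by linarith
  have n1: "\<not> KK < KK" "\<not> KK < KK" by simp_all
  have e1: "KK + 1 - KK = Suc 0" by simp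
  have "M3 $$ (KK,c) = x * UU $$ (KK,c) - gg (Suc 0) c"
    by (simp only: M3_entry[OF Kn c(2)] MU_entry[OF Kn c(2)] n1 e1 if_False diff_zero)
  also have "gg (Suc 0) c = mu 1 * (a 1 * gg 0 c + (\<Sum>l=2..N. a l * UU $$ ((N-l)*T, c)))"
    using gg_Suc[of 0 c] T0 by simp
  also have "gg 0 c = (if c = nn - 1 then 1 else 0)"
  proof -
    have "(N-1)*T = nn - 1" by simp
    moreover have "UU $$ (nn - 1, c) = (if c = nn - 1 then 1 else 0)"
      by (rule U_near) (use c T0 in auto)
    ultimately show ?thesis using gg_0[OF c(2)] by simp
  qed
  also have "UU $$ (KK,c) = (if c = KK then 1 else 0)"
    by (rule U_near) (use c nK Kn in auto)
  also have "(\<Sum>l=2..N. a l * UU $$ ((N-l)*T, c)) = (\<Sum>l=2..N. a l * (if c = nn - 1 then inverse x ^ (l-1) else 0))"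
  proof (rule sum.cong[OF refl])
    fix l assume l: "l \<in> {2..N}"
    show "a l * UU $$ ((N-l)*T, c) = a l * (if c = nn - 1 then inverse x ^ (l-1) else 0)"
      using U_col_l1[OF l c] by simp
  qed
  finally show ?thesis unfolding QQ_split by (auto simp: algebra_simps)
qed

lemma M3_lowI: assumes i: "KK < i" "i < nn" and c: "KK \<le> c" "c < nn"
  shows "M3 $$ (i,c) = (if c = i then x else 0) - (if c = i - 1 then mu (i+1-KK) * x * QQ else 0)"
proof -
  define r where "r = i - KK"
  have r: "1 \<le> r" "r < T" using i nK unfolding r_def by linarith+
  have i1: "i - 1 < nn" using i by simp
  have ni: "\<not> i < KK" "\<not> i - 1 < KK" using i by simp_all
  have e1: "i + 1 - KK = Suc r" "i - 1 + 1 - KK = r" using i unfolding r_def by simp_all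
  have "M3 $$ (i,c) = (x * UU $$ (i,c) - gg (Suc r) c) - mu (Suc r) * a 1 * (x * UU $$ (i - 1,c) - gg r c)"
    by (simp only: M3_entry[OF i(2) c(2)] MU_entry[OF i(2) c(2)] MU_entry[OF i1 c(2)] ni e1 i(1) if_False if_True)
  also have "gg (Suc r) c = mu (Suc r) * (a 1 * gg r c + (\<Sum>l=2..N. a l * UU $$ ((N-l)*T + r, c)))"
    using gg_Suc[OF r(2)] .
  also have "UU $$ (i,c) = (if c = i then 1 else 0)"
    by (rule U_near) (use c i nK in linarith)+
  also have "UU $$ (i - 1,c) = (if c = i - 1 then 1 else 0)"
    by (rule U_near) (use c i nK in auto)
  also have "(\<Sum>l=2..N. a l * UU $$ ((N-l)*T + r, c)) = (\<Sum>l=2..N. a l * (if c = i - 1 then inverse x ^ (l-2) else 0))"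
  proof (rule sum.cong[OF refl])
    fix l assume l: "l \<in> {2..N}"
    have "(N-2)*T + r = i - 1" using i unfolding r_def by simp
    thus "a l * UU $$ ((N-l)*T + r, c) = a l * (if c = i - 1 then inverse x ^ (l-2) else 0)"
      using U_col_l2[OF l r c] by simp
  qed
  finally have "M3 $$ (i,c) = x * (if c = i then 1 else 0) - mu (Suc r) * a 1 * x * (if c = i - 1 then 1 else 0)
      - mu (Suc r) * (\<Sum>l=2..N. a l * (if c = i - 1 then inverse x ^ (l-2) else 0))"
    by (simp add: algebra_simps)
  also have "\<dots> = (if c = i then x else 0) - (if c = i - 1 then mu (i+1-KK) * x * QQ else 0)"
  proof -
    have xq: "mu (i+1-KK) * x * QQ = mu (Suc r) * (a 1 * x + (\<Sum>l=2..N. a l * inverse x ^ (l-2)))"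
      by (simp only: e1 mult.assoc xQQ)
    show ?thesis unfolding xq using i
      by (cases "c = i"; cases "c = i - 1") (simp_all add: algebra_simps sum_distrib_left)
  qed
  finally show ?thesis .
qed


definition yy :: "nat \<Rightarrow> real" where "yy m = (\<Prod>k=1..m. mu k) * QQ ^ m / x"

abbreviation "WW \<equiv> M3 * U2mat nn KK yy"

lemma M3_carr: "M3 \<in> carrier_mat nn nn"
  by (auto simp: Lmat_def Umat_def)

lemma W_entry: "i < nn \<Longrightarrow> c < nn \<Longrightarrow> WW $$ (i,c) = M3 $$ (i,c) + (if c = nn - 1 then (\<Sum>k\<in>{KK..<nn-1}. M3 $$ (i,k) * yy (k+1-KK)) else 0)"
  by (rule U2_mult_entry[OF M3_carr])

lemma yy_step: "x * yy (Suc m) = mu (Suc m) * x * QQ * yy m"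
  unfolding yy_def using x0 by (simp add: field_simps)

lemma sumK: assumes "KK < nn - 1"
  shows "(\<Sum>k\<in>{KK..<nn-1}. M3 $$ (KK,k) * yy (k+1-KK)) = mu 1 * QQ"
proof -
  have "(\<Sum>k\<in>{KK..<nn-1}. M3 $$ (KK,k) * yy (k+1-KK)) =
     (\<Sum>k\<in>{KK..<nn-1}. ((if k = KK then x else 0) - (if k = nn - 1 then mu 1 * QQ else 0)) * yy (k+1-KK))"
  proof (rule sum.cong[OF refl])
    fix k assume "k \<in> {KK..<nn-1}"
    hence k: "KK \<le> k" "k < nn" by auto
    show "M3 $$ (KK,k) * yy (k+1-KK) = ((if k = KK then x else 0) - (if k = nn - 1 then mu 1 * QQ else 0)) * yy (k+1-KK)"
      unfolding M3_lowK[OF k] ..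
  qed
  also have "\<dots> = x * yy 1" using assms by (subst sum_2delta_set) auto
  also have "\<dots> = mu 1 * QQ" unfolding yy_def using x0 by simp
  finally show ?thesis .
qed

lemma sumI: assumes "KK < i" "i < nn"
  shows "(\<Sum>k\<in>{KK..<nn-1}. M3 $$ (i,k) * yy (k+1-KK)) =
     (if i < nn - 1 then x * yy (i+1-KK) else 0) - mu (i+1-KK) * x * QQ * yy (i-KK)"
proof -
  have "(\<Sum>k\<in>{KK..<nn-1}. M3 $$ (i,k) * yy (k+1-KK)) =
     (\<Sum>k\<in>{KK..<nn-1}. ((if k = i then x else 0) - (if k = i - 1 then mu (i+1-KK) * x * QQ else 0)) * yy (k+1-KK))"
  proof (rule sum.cong[OF refl])
    fix k assume "k \<in> {KK..<nn-1}"
    hence k: "KK \<le> k" "k < nn" by auto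
    show "M3 $$ (i,k) * yy (k+1-KK) = ((if k = i then x else 0) - (if k = i - 1 then mu (i+1-KK) * x * QQ else 0)) * yy (k+1-KK)"
      unfolding M3_lowI[OF assms k] ..
  qed
  also have "\<dots> = (if i < nn - 1 then x * yy (i+1-KK) else 0) - mu (i+1-KK) * x * QQ * yy (i - 1 + 1 - KK)"
    using assms by (subst sum_2delta_set) auto
  also have "i - 1 + 1 - KK = i - KK" using assms by simp
  finally show ?thesis .
qed

lemma W_tri: assumes ic: "i < c" and c: "c < nn" shows "WW $$ (i,c) = 0"
proof -
  have i: "i < nn" using ic c by simp
  consider "i < KK" | "i = KK" | "KK < i" by linarith
  then show ?thesis
  proof cases
    case 1
    have "(\<Sum>k\<in>{KK..<nn-1}. M3 $$ (i,k) * yy (k+1-KK)) = 0"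
    proof (rule sum.neutral, rule ballI)
      fix k assume "k \<in> {KK..<nn-1}"
      hence k: "k < nn" "k \<noteq> i" using 1 by auto
      show "M3 $$ (i,k) * yy (k+1-KK) = 0" unfolding M3_upper[OF 1 k(1)] using k by simp
    qed
    then show ?thesis unfolding W_entry[OF i c] M3_upper[OF 1 c] using ic by simp
  next
    case 2
    have c': "KK \<le> c" using 2 ic by simp
    show ?thesis
    proof (cases "c = nn - 1")
      case True
      have "KK < nn - 1" using 2 ic True by simp
      have iK: "KK < nn" using i 2 by simp
      from \<open>KK < nn - 1\<close> show ?thesis unfolding 2 unfolding W_entry[OF iK c] M3_lowK[OF c' c] sumK[OF \<open>KK < nn - 1\<close>] using ic 2 True by simp
    next
      case False
      have iK: "KK < nn" using i 2 by simp
      from False show ?thesis unfolding 2 unfolding W_entry[OF iK c] M3_lowK[OF c' c] using 2 ic c by simp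
    qed
  next
    case 3
    have c': "KK \<le> c" using 3 ic by simp
    show ?thesis
    proof (cases "c = nn - 1")
      case True
      have m: "i+1-KK = Suc (i-KK)" using 3 by simp
      have "x * yy (i+1-KK) = mu (i+1-KK) * x * QQ * yy (i-KK)" unfolding m by (rule yy_step)
      then show ?thesis unfolding W_entry[OF i c] M3_lowI[OF 3 i c' c] sumI[OF 3 i] using 3 True ic by simp
    next
      case False
      then show ?thesis unfolding W_entry[OF i c] M3_lowI[OF 3 i c' c] using 3 ic c by simp
    qed
  qed
qed

lemma W_diag: assumes i: "i < nn - 1" shows "WW $$ (i,i) = x"
proof -
  have i': "i < nn" using i by simp
  consider (a) "i < KK" | (b) "i = KK" | (c) "KK < i" by linarith
  then show ?thesis
  proof cases
    case a then show ?thesis unfolding W_entry[OF i' i'] M3_upper[OF a i'] using i by simp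
  next
    case b
    have "KK \<le> i" using b by simp
    have iK: "KK < nn" using i' b by simp
    have iK': "KK < nn - 1" using i b by simp
    from iK' show ?thesis unfolding b unfolding W_entry[OF iK iK] M3_lowK[OF order.refl iK] by simp
  next
    case c
    have "KK \<le> i" using c by simp
    then show ?thesis unfolding W_entry[OF i' i'] M3_lowI[OF c i' \<open>KK \<le> i\<close> i'] using i by simp
  qed
qed

lemma W_last: "WW $$ (nn-1,nn-1) = x - (\<Prod>k=1..T. mu k) * QQ ^ T"
proof -
  have l: "nn - 1 < nn" by simp
  show ?thesis
  proof (cases "T = 1")
    case True
    hence e: "nn - 1 = KK" using nK by simp
    have "KK \<le> KK" "KK < nn" using nK T1 by auto
    have "WW $$ (nn-1,nn-1) = WW $$ (KK,KK)" unfolding e ..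
    also have "\<dots> = M3 $$ (KK,KK)"
      unfolding W_entry[OF \<open>KK < nn\<close> \<open>KK < nn\<close>] using e by simp
    also have "\<dots> = x - mu 1 * QQ"
      unfolding M3_lowK[OF \<open>KK \<le> KK\<close> \<open>KK < nn\<close>] using e by simp
    finally show ?thesis using True by simp
  next
    case False
    hence K: "KK < nn - 1" using T1 nK by linarith
    have K': "KK \<le> nn - 1" using K by simp
    have e: "nn - 1 + 1 - KK = Suc (T - 1)" "nn - 1 - KK = T - 1" using nK False T1 by simp_all
    have "mu (nn - 1 + 1 - KK) * x * QQ * yy (nn - 1 - KK) = (\<Prod>k=1..T. mu k) * QQ ^ T"
    proof -
      have "mu (Suc (T-1)) * x * QQ * yy (T-1) = (\<Prod>k=1..Suc (T-1). mu k) * QQ ^ (Suc (T-1))"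
        unfolding yy_def using x0 by (simp add: field_simps prod.nat_ivl_Suc')
      thus ?thesis unfolding e using T1 by simp
    qed
    moreover have ne: "(nn - 1 = nn - 1 - 1) = False" using K by simp
    ultimately show ?thesis unfolding W_entry[OF l l] M3_lowI[OF K l K' l] sumI[OF K l] by (simp only: ne if_False if_True refl) simp
  qed
qed


lemma det_WW: "det WW = x ^ (nn - 1) * (x - (\<Prod>k=1..T. mu k) * QQ ^ T)"
proof -
  have Wc: "WW \<in> carrier_mat nn nn" using M3_carr by (simp add: U2mat_def)
  have "det WW = prod_list (diag_mat WW)"
    by (rule det_lower_triangular[OF _ Wc]) (rule W_tri)
  also have "\<dots> = (\<Prod>i = 0..<nn. WW $$ (i,i))"
  proof -
    have d: "dim_row WW = nn" using Wc by (simp only: carrier_matD)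
    show ?thesis by (simp only: prod_list_diag_prod d)
  qed
  also have "\<dots> = (\<Prod>i = 0..<nn-1. WW $$ (i,i)) * WW $$ (nn-1, nn-1)"
    by (simp add: prod.atLeastLessThan_Suc)
  also have "(\<Prod>i = 0..<nn-1. WW $$ (i,i)) = (\<Prod>i = 0..<nn-1. x)"
  proof (rule prod.cong[OF refl])
    fix i assume "i \<in> {0..<nn-1}"
    hence "i < nn - 1" by simp
    thus "WW $$ (i,i) = x" by (rule W_diag)
  qed
  also have "WW $$ (nn-1, nn-1) = x - (\<Prod>k=1..T. mu k) * QQ ^ T" by (rule W_last)
  finally show ?thesis by simp
qed

lemma det_MM: "det MM = x ^ (nn - 1) * (x - (\<Prod>k=1..T. mu k) * QQ ^ T)"
proof -
  have Lc: "LL \<in> carrier_mat nn nn" by (simp add: Lmat_def)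
  have U2c: "U2mat nn KK yy \<in> carrier_mat nn nn" by (simp add: U2mat_def)
  have MUc: "MM * UU \<in> carrier_mat nn nn" by (rule mult_carrier_mat[OF carr])
  have "det WW = det M3 * det (U2mat nn KK yy)" by (rule det_mult[OF M3_carr U2c])
  also have "det M3 = det LL * det (MM * UU)" by (rule det_mult[OF Lc MUc])
  also have "det (MM * UU) = det MM * det UU" by (rule det_mult[OF carr])
  finally have "det WW = det MM" by (simp add: det_Lmat det_Umat det_U2mat)
  thus ?thesis using det_WW by simp
qed

lemma poly_char: "poly (char_poly AA) x =
   poly (monom 1 ((N - 1) * T + 1) - Polynomial.smult (\<Prod>m = 1..T. mu m) ((\<Sum>l = 1..N. monom (a l) (N - l)) ^ T)) x"
proof -
  have Ac: "AA \<in> carrier_mat nn nn" by (simp add: dfc_jacobian_def)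
  have "- char_matrix AA x = MM"
    by (rule eq_matI) (use Ac in \<open>auto simp: char_matrix_def\<close>)
  hence "poly (char_poly AA) x = det MM" using char_poly_matrix[OF Ac, of x] by simp
  also have "\<dots> = x ^ (nn - 1) * (x - (\<Prod>k=1..T. mu k) * QQ ^ T)" by (rule det_MM)
  also have "\<dots> = x ^ nn - (\<Prod>k=1..T. mu k) * (QQ * x ^ (N - 1)) ^ T"
  proof -
    have e: "x ^ (nn - 1) = (x ^ (N-1)) ^ T" by (simp add: power_mult)
    have "x ^ (nn - 1) * (x - (\<Prod>k=1..T. mu k) * QQ ^ T) = x * x ^ (nn - 1) - (\<Prod>k=1..T. mu k) * (QQ ^ T * x ^ (nn - 1))"
      by (simp add: algebra_simps)
    also have "x * x ^ (nn - 1) = x ^ nn" by simp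
    also have "QQ ^ T * x ^ (nn - 1) = (QQ * x ^ (N - 1)) ^ T" unfolding e by (simp add: power_mult_distrib)
    finally show ?thesis .
  qed
  also have "QQ * x ^ (N - 1) = (\<Sum>l = 1..N. a l * x ^ (N - l))"
    unfolding sum_distrib_right
  proof (rule sum.cong[OF refl])
    fix l assume l: "l \<in> {1..N}"
    have "x ^ (N - 1) = x ^ (l - 1) * x ^ (N - l)" using l by (simp add: power_add[symmetric])
    thus "a l * inverse x ^ (l - 1) * x ^ (N - 1) = a l * x ^ (N - l)"
      using x0 by (simp add: power_inverse field_simps)
  qed
  finally show ?thesis by (simp add: poly_monom poly_sum)
qed

end

theorem theorem1:
  fixes N T :: nat and a mu :: "nat \<Rightarrow> real"
  assumes "N \<ge> 2" and "T \<ge> 1"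
    and "(\<Sum>l = 1..N. a l) = 1"
  shows "char_poly (dfc_jacobian N T a mu) =
           monom 1 ((N - 1) * T + 1)
           - Polynomial.smult (\<Prod>m = 1..T. mu m) ((\<Sum>l = 1..N. monom (a l) (N - l)) ^ T)"
proof -
  let ?p = "char_poly (dfc_jacobian N T a mu) - (monom 1 ((N - 1) * T + 1)
           - Polynomial.smult (\<Prod>m = 1..T. mu m) ((\<Sum>l = 1..N. monom (a l) (N - l)) ^ T))"
  have z: "poly ?p x = 0" if "x \<noteq> 0" for x
    using poly_char[OF assms(1,2) that] by simp
  show ?thesis
  proof (rule ccontr)
    assume "\<not> ?thesis"
    hence "?p \<noteq> 0" by simp
    hence "finite {x. poly ?p x = 0}" by (rule poly_roots_finite)
    moreover have "- {0::real} \<subseteq> {x. poly ?p x = 0}" using z by auto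
    ultimately have "finite (- {0::real})" by (rule finite_subset[rotated])
    moreover have "infinite (- {0::real})"
    proof
      assume "finite (- {0::real})"
      hence "finite (insert 0 (- {0::real}))" by simp
      moreover have "insert 0 (- {0::real}) = UNIV" by auto
      ultimately show False using infinite_UNIV_char_0[where 'a=real] by simp
    qed
    ultimately show False by simp
  qed
qed

end
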